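(* Let $b,c\in Z^{10}$ with $\sum_i b_i=\sum_i c_i=0$, and assume $t\nmid B_i$ and $t\nmid C_i$ for all odd $i$. Let $l$ be odd such that $t\mid B_l+B_{l+2}$, $t\mid B_{l+2}+B_{l+4}$, $t\nmid B_i+B_{i+2}$ for all odd $i\notin\{l,l+2\}$, and likewise $t\mid C_l+C_{l+2}$, $t\mid C_{l+2}+C_{l+4}$, $t\nmid C_i+C_{i+2}$ for all odd $i\notin\{l,l+2\}$ (indices mod $10$). Then $\mathbb{M}(b)$ and $\mathbb{M}(c)$ are isomorphic $B_{5,10}$-modules.
   Context: Let $Z=\mathbb{C}[[t]]$. Let $\Gamma_{10}$ be the quiver with vertices $0,1,\dots,9$ (indices taken mod $10$) on a cycle and arrows $x_i\colon i-1\to i$, $y_i\colon i\to i-1$ for $i=1,\dots,10$. Let $B_{5,10}$ be the completed path algebra of $\Gamma_{10}$ modulo the closed ideal generated by $xy=yx$ and $x^5=y^5$ at every vertex. For $b=(b_1,\dots,b_{10})\in Z^{10}$ with $\sum_i b_i=0$, the $B_{5,10}$-module $\mathbb{M}(b)$ has $V_i=Z\oplus Z$ at every vertex, and for odd $j$: $x_j=\begin{pmatrix} t& b_j\\ 0&1\end{pmatrix}$, $y_j=\begin{pmatrix} 1&-b_j\\0&t\end{pmatrix}$; for even $j$: $x_j=\begin{pmatrix}1&b_j\\0&t\end{pmatrix}$, $y_j=\begin{pmatrix}t&-b_j\\0&1\end{pmatrix}$. An isomorphism $\mathbb{M}(b)\to\mathbb{M}(c)$ is a family of invertible $Z$-linear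 maps $\varphi_i\colon Z^2\to Z^2$ commuting with all $x_i$ and $y_i$. For odd $i$ write $B_i=b_i+b_{i+1}$ and $C_i=c_i+c_{i+1}$ (indices mod $10$). *)

theory Defs
  imports "HOL-Computational_Algebra.Formal_Power_Series" "Jordan_Normal_Form.Matrix"
begin

text \<open>Z = C[[t]] is modelled as complex fps, t = fps_X. Tuples b = (b_1,...,b_10) are
functions nat => complex fps, of which only the values at 1..10 matter.
Indices are taken mod 10 via idx, which maps every natural number to its
representative in 1..10.\<close>

type_synonym Z = "complex fps"

definition idx :: "nat \<Rightarrow> nat" where
  "idx k = ((k + 9) mod 10) + 1"

definition Bsum :: "(nat \<Rightarrow> Z) \<Rightarrow> nat \<Rightarrow> Z" where
  "Bsum b i = b (idx i) + b (idx (i + 1))"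

text \<open>The arrow matrices of M(b) (acting on column vectors in Z^2).\<close>
definition xmat :: "(nat \<Rightarrow> Z) \<Rightarrow> nat \<Rightarrow> Z mat" where
  "xmat b j = (if odd j then mat_of_rows_list 2 [[fps_X, b j], [0, 1]]
                        else mat_of_rows_list 2 [[1, b j], [0, fps_X]])"

definition ymat :: "(nat \<Rightarrow> Z) \<Rightarrow> nat \<Rightarrow> Z mat" where
  "ymat b j = (if odd j then mat_of_rows_list 2 [[1, - b j], [0, fps_X]]
                        else mat_of_rows_list 2 [[fps_X, - b j], [0, 1]])"

text \<open>Isomorphism M(b) -> M(c): invertible Z-linear maps phi_i on V_i = Z^2 (vertices 0..9)
commuting with all arrows; x_j : V_(j-1) -> V_(j mod 10), y_j : V_(j mod 10) -> V_(j-1).\<close>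
definition M_iso :: "(nat \<Rightarrow> Z) \<Rightarrow> (nat \<Rightarrow> Z) \<Rightarrow> bool" where
  "M_iso b c \<longleftrightarrow> (\<exists>\<phi> :: nat \<Rightarrow> Z mat.
      (\<forall>i < 10. \<phi> i \<in> carrier_mat 2 2 \<and> invertible_mat (\<phi> i)) \<and>
      (\<forall>j \<in> {1..10}.
          \<phi> (j mod 10) * xmat b j = xmat c j * \<phi> (j - 1) \<and>
          \<phi> (j - 1) * ymat b j = ymat c j * \<phi> (j mod 10)))"

end

theory Submission
  imports Defs
begin

lemma X_dvd_iff: "fps_X dvd (f::complex fps) \<longleftrightarrow> fps_nth f 0 = 0"
proof
  assume "fps_X dvd f" then obtain g where "f = fps_X * g" by blast
  thus "fps_nth f 0 = 0" by simp
next
  assume h: "fps_nth f 0 = 0"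
  have "f = fps_X * fps_shift 1 f"
    by (rule fps_ext) (auto simp: h fps_X_mult_nth)
  thus "fps_X dvd f" by (rule dvdI)
qed

lemma X_shift: "fps_nth (f::complex fps) 0 = 0 \<Longrightarrow> fps_X * fps_shift 1 f = f"
  by (rule fps_ext) (auto simp: fps_X_mult_nth)

definition mk :: "Z \<Rightarrow> Z \<Rightarrow> Z \<Rightarrow> Z \<Rightarrow> Z mat" where
  "mk a b c d = mat_of_rows_list 2 [[a,b],[c,d]]"

lemma mk_mult: "mk a b c d * mk e f g h = mk (a*e+b*g) (a*f+b*h) (c*e+d*g) (c*f+d*h)"
  unfolding mk_def
  apply (rule eq_matI)
  apply (auto simp: mat_of_rows_list_def scalar_prod_def less_2_cases_iff numeral_2_eq_2 less_Suc_eq)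
  done

lemma mk_one: "mk 1 0 0 1 = 1\<^sub>m 2"
  unfolding mk_def
  by (rule eq_matI) (auto simp: mat_of_rows_list_def less_2_cases_iff)

lemma mk_dims[simp]: "dim_row (mk a b c d) = 2" "dim_col (mk a b c d) = 2"
  by (simp_all add: mk_def mat_of_rows_list_def)

lemma mk_carrier: "mk a b c d \<in> carrier_mat 2 2"
  unfolding carrier_mat_def by simp


lemma mk_inv:
  assumes "p*s - q*r = fps_const (d::complex)" "d \<noteq> 0"
  shows "invertible_mat (mk p q r s)"
proof -
  let ?C = "fps_const (1/d)"
  let ?B = "mk (s*?C) (-q*?C) (-r*?C) (p*?C)"
  have dc: "fps_const d * ?C = 1" using assms(2) by (subst fps_const_mult) simp
  have 1: "mk p q r s * ?B = 1\<^sub>m 2"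
    unfolding mk_mult mk_one[symmetric]
  proof -
    have "p * (s * ?C) + q * (- r * ?C) = (p*s - q*r) * ?C" by (simp add: algebra_simps)
    moreover have "r * (s * ?C) + s * (- r * ?C) = 0" by (simp add: algebra_simps)
    moreover have "p * (- q * ?C) + q * (p * ?C) = 0" by (simp add: algebra_simps)
    moreover have "r * (- q * ?C) + s * (p * ?C) = (p*s - q*r) * ?C" by (simp add: algebra_simps)
    ultimately show "mk (p * (s * ?C) + q * (- r * ?C)) (p * (- q * ?C) + q * (p * ?C))
        (r * (s * ?C) + s * (- r * ?C)) (r * (- q * ?C) + s * (p * ?C)) = mk 1 0 0 1"
      using assms(1) dc by simp
  qed
  have 2: "?B * mk p q r s = 1\<^sub>m 2"
    unfolding mk_mult mk_one[symmetric]
  proof -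
    have "s * ?C * p + - q * ?C * r = (p*s - q*r) * ?C" by (simp add: algebra_simps)
    moreover have "s * ?C * q + - q * ?C * s = 0" by (simp add: algebra_simps)
    moreover have "- r * ?C * p + p * ?C * r = 0" by (simp add: algebra_simps)
    moreover have "- r * ?C * q + p * ?C * s = (p*s - q*r) * ?C" by (simp add: algebra_simps)
    ultimately show "mk (s * ?C * p + - q * ?C * r) (s * ?C * q + - q * ?C * s)
        (- r * ?C * p + p * ?C * r) (- r * ?C * q + p * ?C * s) = mk 1 0 0 1"
      using assms(1) dc by simp
  qed
  show ?thesis unfolding invertible_mat_def inverts_mat_def
    using 1 2 by (auto intro!: exI[of _ ?B])
qed

lemma xmat_odd: "odd j \<Longrightarrow> xmat b j = mk fps_X (b j) 0 1" by (simp add: xmat_def mk_def)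
lemma xmat_even: "even j \<Longrightarrow> xmat b j = mk 1 (b j) 0 fps_X" by (simp add: xmat_def mk_def)
lemma ymat_odd: "odd j \<Longrightarrow> ymat b j = mk 1 (- b j) 0 fps_X" by (simp add: ymat_def mk_def)
lemma ymat_even: "even j \<Longrightarrow> ymat b j = mk fps_X (- b j) 0 1" by (simp add: ymat_def mk_def)

lemma sum10: "(\<Sum>i=1..10. b i) = (b::nat\<Rightarrow>Z) 1 + b 2 + b 3 + b 4 + b 5 + b 6 + b 7 + b 8 + b 9 + (b 10::Z)"
  by (simp add: eval_nat_numeral atLeastAtMostSuc_conv)

lemma mk_eq_iff: "mk a b c d = mk a' b' c' d' \<longleftrightarrow> a = a' \<and> b = b' \<and> c = c' \<and> d = d'"
proof
  assume "mk a b c d = mk a' b' c' d'"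
  hence "\<forall>i j. mk a b c d $$ (i,j) = mk a' b' c' d' $$ (i,j)" by simp
  thus "a = a' \<and> b = b' \<and> c = c' \<and> d = d'"
    unfolding mk_def mat_of_rows_list_def
    apply -
    apply (frule spec[of _ 0], drule spec[of _ 1])
    apply (frule spec[of _ 0], drule spec[of _ 1])
    apply (frule spec[of _ 0], drule spec[of _ 1])
    by simp
qed simp

lemma odd_step:
  assumes "fps_X * E = b*p + q - c*(r*b + s)"
  shows "mk p q r s * mk fps_X b 0 1 = mk fps_X c 0 1 * mk (p - c*r) E (fps_X*r) (r*b+s)"
    and "mk (p - c*r) E (fps_X*r) (r*b+s) * mk 1 (-b) 0 fps_X = mk 1 (-c) 0 fps_X * mk p q r s"
proof -
  have e': "E * fps_X = b*p + q - c*(r*b + s)" using assms by (simp add: mult.commute)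
  show "mk p q r s * mk fps_X b 0 1 = mk fps_X c 0 1 * mk (p - c*r) E (fps_X*r) (r*b+s)"
    unfolding mk_mult mk_eq_iff assms e' by (simp add: algebra_simps)
  show "mk (p - c*r) E (fps_X*r) (r*b+s) * mk 1 (-b) 0 fps_X = mk 1 (-c) 0 fps_X * mk p q r s"
    unfolding mk_mult mk_eq_iff assms e' by (simp add: algebra_simps)
qed

lemma even_step:
  assumes "p = p' + g*r'" "q = - be*p + q' + g*s'" "r = r'" "s = s' - be*r'"
    "g = c' + c" "be = b' + b"
    "fps_X * E = b*p + q - c*(r*b + s)"
  shows "mk (p - c*r) E (fps_X*r) (r*b+s) * mk 1 b' 0 fps_X = mk 1 c' 0 fps_X * mk p' q' r' s'"
    and "mk p' q' r' s' * mk fps_X (-b') 0 1 = mk fps_X (-c') 0 1 * mk (p - c*r) E (fps_X*r) (r*b+s)"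
proof -
  have e: "fps_X * E = b*p + q - c*(r*b + s)" using assms by simp
  have e': "E * fps_X = b*p + q - c*(r*b + s)" using assms by (simp add: mult.commute)
  show "mk (p - c*r) E (fps_X*r) (r*b+s) * mk 1 b' 0 fps_X = mk 1 c' 0 fps_X * mk p' q' r' s'"
    unfolding mk_mult mk_eq_iff e e' unfolding assms(1-6) by (simp add: algebra_simps)
  show "mk p' q' r' s' * mk fps_X (-b') 0 1 = mk fps_X (-c') 0 1 * mk (p - c*r) E (fps_X*r) (r*b+s)"
    unfolding mk_mult mk_eq_iff e e' unfolding assms(1-6) by (simp add: algebra_simps)
qed

fun Bb :: "(nat \<Rightarrow> Z) \<Rightarrow> nat \<Rightarrow> Z" where
  "Bb b 0 = 0"
| "Bb b (Suc k) = Bb b k + b (2*k+2) + b (2*k+3)"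

definition ab :: "(nat \<Rightarrow> Z) \<Rightarrow> nat \<Rightarrow> complex" where
  "ab b k = fps_nth (b (2*k+1) - Bb b k) 0"

lemma Bb1: "Bb b 1 = b 2 + b 3"
  by (simp add: eval_nat_numeral)
lemma Bb1': "Bb b (Suc 0) = b 2 + b 3"
  using Bb1 by simp
lemma Bb2: "Bb b 2 = b 2 + b 3 + b 4 + b 5"
  by (simp add: eval_nat_numeral)
lemma Bb3: "Bb b 3 = b 2 + b 3 + b 4 + b 5 + b 6 + b 7"
  by (simp add: eval_nat_numeral)
lemma Bb4: "Bb b 4 = b 2 + b 3 + b 4 + b 5 + b 6 + b 7 + b 8 + b 9"
  by (simp add: eval_nat_numeral)

lemma Bb_step:
  assumes "(\<Sum>i=1..10. b i) = 0" "k \<in> {1..5}"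
  shows "Bb b (k mod 5) = Bb b (k-1) + b (2*k) + b (2*(k mod 5)+1)"
proof -
  have s: "b 1 + b 2 + b 3 + b 4 + b 5 + b 6 + b 7 + b 8 + b 9 + b 10 = 0"
    using assms(1) unfolding sum10 .
  from assms(2) consider "k=1" | "k=2" | "k=3" | "k=4" | "k=5" by fastforce
  thus ?thesis
  proof cases
    case 5
    have "Bb b 4 + b 10 + b 1 = b 1 + b 2 + b 3 + b 4 + b 5 + b 6 + b 7 + b 8 + b 9 + b 10"
      unfolding Bb4 by (simp add: ac_simps)
    hence X: "Bb b 4 + b 10 + b 1 = 0" using s by (simp only:)
    thus ?thesis using 5 by simp
  qed (simp_all add: Bb1 Bb1' Bb2 Bb3 Bb4 del: Bb.simps(2))
qed

lemma core:
  fixes b c :: "nat \<Rightarrow> Z" and h11 h12 h21 h22 :: complex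
  assumes sb: "(\<Sum>i=1..10. b i) = 0" and sc: "(\<Sum>i=1..10. c i) = 0"
    and det: "h11*h22 - h12*h21 \<noteq> 0"
    and cond: "\<forall>k<5. h11 * ab b k + h12 = ab c k * (h21 * ab b k + h22)"
  shows "M_iso b c"
proof -
  define P where "P k = fps_const h11 + Bb c k * fps_const h21" for k
  define Q where "Q k = - Bb b k * P k + fps_const h12 + Bb c k * fps_const h22" for k
  define R where "R (k::nat) = fps_const h21" for k
  define S where "S k = fps_const h22 - Bb b k * fps_const h21" for k
  define F where "F k = b (2*k+1) * P k + Q k - c (2*k+1) * (R k * b (2*k+1) + S k)" for k
  define E where "E k = fps_shift 1 (F k)" for k
  define \<phi> where "\<phi> i = (if even i then mk (P (i div 2) - c(2*(i div 2)+1) * R (i div 2)) (E (i div 2))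
      (fps_X * R (i div 2)) (R (i div 2) * b(2*(i div 2)+1) + S (i div 2))
      else mk (P (i div 2)) (Q (i div 2)) (R (i div 2)) (S (i div 2)))" for i
  have F0: "fps_nth (F k) 0 = 0" if "k < 5" for k
  proof -
    have "F k = (fps_const h11 * (b (2*k+1) - Bb b k) + fps_const h12)
       - (c (2*k+1) - Bb c k) * (fps_const h21 * (b (2*k+1) - Bb b k) + fps_const h22)"
      unfolding F_def P_def Q_def R_def S_def by (simp add: algebra_simps)
    hence "fps_nth (F k) 0 = h11 * ab b k + h12 - ab c k * (h21 * ab b k + h22)"
      by (simp add: ab_def)
    thus ?thesis using cond that by simp
  qed
  have XE: "fps_X * E k = F k" if "k < 5" for k
    unfolding E_def using X_shift F0 that by blast
  have inv: "invertible_mat (\<phi> i)" if "i < 10" for i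
  proof (cases "even i")
    case True
    let ?k = "i div 2"
    have "?k < 5" using that by simp
    note xe = XE[OF this]
    have "(P ?k - c(2*?k+1) * R ?k) * (R ?k * b(2*?k+1) + S ?k) - E ?k * (fps_X * R ?k)
        = fps_const (h11*h22 - h12*h21)"
    proof -
      have "E ?k * (fps_X * R ?k) = F ?k * R ?k" using xe by (metis mult.assoc mult.commute)
      moreover have "fps_const (h11*h22 - h12*h21) = fps_const h11 * fps_const h22 - fps_const h12 * fps_const h21"
        by simp
      ultimately show ?thesis unfolding F_def P_def Q_def R_def S_def by (simp add: algebra_simps)
    qed
    thus ?thesis using True det unfolding \<phi>_def by (simp add: mk_inv)
  next
    case False
    let ?k = "i div 2"
    have "P ?k * S ?k - Q ?k * R ?k = fps_const (h11*h22 - h12*h21)"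
    proof -
      have "fps_const (h11*h22 - h12*h21) = fps_const h11 * fps_const h22 - fps_const h12 * fps_const h21"
        by simp
      thus ?thesis unfolding P_def Q_def R_def S_def by (simp add: algebra_simps)
    qed
    thus ?thesis using False det unfolding \<phi>_def by (simp add: mk_inv)
  qed
  have oddj: "\<phi> j * xmat b j = xmat c j * \<phi> (j - 1) \<and> \<phi> (j - 1) * ymat b j = ymat c j * \<phi> j"
    if "k < 5" "j = 2*k+1" for j k
  proof -
    have o: "odd j" "j div 2 = k" "(j - 1) div 2 = k" "even (j-1)" using that by auto
    show ?thesis
      using odd_step[of "E k" "b (2*k+1)" "P k" "Q k" "c(2*k+1)" "R k" "S k"] XE[OF that(1)]
      unfolding \<phi>_def F_def using o that(2) by (simp add: xmat_odd ymat_odd)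
  qed
  have evenj: "\<phi> (j mod 10) * xmat b j = xmat c j * \<phi> (j - 1) \<and> \<phi> (j - 1) * ymat b j = ymat c j * \<phi> (j mod 10)"
    if "k \<in> {1..5}" "j = 2*k" for j k
  proof -
    let ?k = "k mod 5"
    have kr: "1 \<le> k" "k \<le> 5" using that(1) by auto
    have o: "even j" "even (j mod 10)" "(j mod 10) div 2 = ?k" "odd (j-1)" "(j - 1) div 2 = k - 1"
    proof -
      have m: "j mod 10 = 2 * (k mod 5)" using that(2) mod_mult_mult1[of 2 k 5] by simp
      have m2: "j - 1 = 2*(k-1) + 1" using that(2) kr by simp
      show "even j" "even (j mod 10)" "(j mod 10) div 2 = ?k" "odd (j-1)" "(j - 1) div 2 = k - 1"
        unfolding m m2 using that(2) by simp_all
    qed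
    have kk: "?k < 5" by simp
    have bs: "Bb b ?k = Bb b (k-1) + b (2*k) + b (2*?k+1)" using Bb_step[OF sb that(1)] .
    have cs: "Bb c ?k = Bb c (k-1) + c (2*k) + c (2*?k+1)" using Bb_step[OF sc that(1)] .
    have h1: "P ?k = P (k-1) + (c (2*k) + c (2*?k+1)) * R (k-1)"
      unfolding P_def R_def cs by (simp add: algebra_simps)
    have h2: "Q ?k = - (b (2*k) + b (2*?k+1)) * P ?k + Q (k-1) + (c (2*k) + c (2*?k+1)) * S (k-1)"
      unfolding Q_def S_def P_def R_def bs cs by (simp add: algebra_simps)
    have h4: "S ?k = S (k-1) - (b (2*k) + b (2*?k+1)) * R (k-1)"
      unfolding S_def R_def bs by (simp add: algebra_simps)
    show ?thesis
      using even_step[OF h1 h2 _ h4 refl refl, of "R ?k" "E ?k"] XE[OF kk]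
      unfolding \<phi>_def F_def using o that(2) by (simp add: xmat_even ymat_even R_def)
  qed
  have A: "\<forall>i<10. \<phi> i \<in> carrier_mat 2 2 \<and> invertible_mat (\<phi> i)"
    using inv by (auto simp: \<phi>_def mk_carrier)
  have B: "\<forall>j\<in>{1..10}. \<phi> (j mod 10) * xmat b j = xmat c j * \<phi> (j - 1) \<and> \<phi> (j - 1) * ymat b j = ymat c j * \<phi> (j mod 10)"
  proof
    fix j :: nat assume j: "j \<in> {1..10}"
    show "\<phi> (j mod 10) * xmat b j = xmat c j * \<phi> (j - 1) \<and> \<phi> (j - 1) * ymat b j = ymat c j * \<phi> (j mod 10)"
    proof (cases "even j")
      case True
      then obtain k where k: "j = 2*k" by blast
      with j have "k \<in> {1..5}" by auto
      thus ?thesis using evenj k by blast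
    next
      case False
      then obtain k where k: "j = 2*k+1" using oddE by blast
      with j have k5: "k < 5" by auto
      with k have "j < 10" by simp
      hence "j mod 10 = j" by simp
      thus ?thesis using oddj[OF k5 k] by simp
    qed
  qed
  show ?thesis unfolding M_iso_def using A B by blast
qed

lemma idx_mod: "idx (i mod 10) = idx i"
  unfolding idx_def by (simp add: mod_add_left_eq)

lemma idx_add: "idx (l + n) = idx (idx l + n)"
proof -
  have "idx l + n = (l + 9) mod 10 + (n + 1)" unfolding idx_def by simp
  hence "(idx l + n) mod 10 = ((l + 9) mod 10 + (n + 1)) mod 10" by (simp only:)
  also have "\<dots> = (l + 9 + (n + 1)) mod 10" by (rule mod_add_left_eq)
  also have "l + 9 + (n + 1) = (l + n) + 10" by simp
  finally have "(idx l + n) mod 10 = (l + n) mod 10" by simp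
  thus ?thesis using idx_mod[of "idx l + n"] idx_mod[of "l+n"] by metis
qed

lemma Bsum_shift: "Bsum b (l + n) = Bsum b (idx l + n)"
  unfolding Bsum_def using idx_add[of l n] idx_add[of l "n+1"] by (simp add: add.assoc)

lemma Bsum_mod: "Bsum b i = Bsum b (i mod 10)"
proof -
  have "idx (i mod 10 + 1) = idx (i + 1)"
    using idx_mod[of "i mod 10 + 1"] idx_mod[of "i + 1"] by (metis Suc_eq_plus1 mod_Suc_eq)
  thus ?thesis unfolding Bsum_def using idx_mod[of i] by simp
qed

lemma idx_id: "1 \<le> i \<Longrightarrow> i \<le> 10 \<Longrightarrow> idx i = i"
proof -
  assume a: "1 \<le> i" "i \<le> 10"
  have "i + 9 = (i - 1) + 10" using a by simp
  hence "(i + 9) mod 10 = (i - 1) mod 10" by (metis mod_add_self2)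
  also have "\<dots> = i - 1" using a by simp
  finally show "idx i = i" unfolding idx_def using a by simp
qed

lemma ab_step: "ab b k - ab b (Suc k) = fps_nth (b (2*k+1) + b (2*k+2)) 0"
proof -
  have e: "2 * Suc k + 1 = 2*k+3" by simp
  show ?thesis unfolding ab_def e Bb.simps(2) by (simp add: algebra_simps)
qed

lemma Bsum_odd: "k < 5 \<Longrightarrow> Bsum b (2*k+1) = b (2*k+1) + b (2*k+2)"
  unfolding Bsum_def using idx_id[of "2*k+1"] idx_id[of "2*k+1+1"] by simp

lemma ab_wrap:
  fixes b :: "nat \<Rightarrow> Z"
  assumes s: "(\<Sum>i=1..10. b i) = 0"
  shows "ab b 4 - ab b 0 = fps_nth (Bsum b 9) 0"
proof -
  have sm: "b 1 + b 2 + b 3 + b 4 + b 5 + b 6 + b 7 + b 8 + b 9 + b 10 = 0"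
    using s unfolding sum10 .
  have e4: "2*4+1 = (9::nat)" and e0: "2*0+1 = (1::nat)" by simp_all
  have a4: "ab b 4 = fps_nth (b 9 - Bb b 4) 0" unfolding ab_def e4 ..
  have a0: "ab b 0 = fps_nth (b 1) 0" unfolding ab_def e0 by simp
  have bs: "Bsum b 9 = b 9 + b 10" using Bsum_odd[of 4 b] unfolding e4 by simp
  have "b 9 - Bb b 4 - b 1 = b 9 + b 10"
  proof -
    have "b 9 - Bb b 4 - b 1 - (b 9 + b 10) = - (b 1 + b 2 + b 3 + b 4 + b 5 + b 6 + b 7 + b 8 + b 9 + b 10)"
      unfolding Bb4 by (simp add: algebra_simps)
    hence "b 9 - Bb b 4 - b 1 - (b 9 + b 10) = - 0" unfolding sm .
    thus ?thesis by (simp only: right_minus_eq minus_zero)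
  qed
  hence "fps_nth (b 9 - Bb b 4 - b 1) 0 = fps_nth (b 9 + b 10) 0" by (rule arg_cong)
  thus ?thesis unfolding a4 a0 bs by simp
qed

lemma ab_diff:
  fixes b :: "nat \<Rightarrow> Z"
  assumes s: "(\<Sum>i=1..10. b i) = 0"
  shows "ab b (m mod 5) - ab b (Suc m mod 5) = fps_nth (Bsum b (2*m+1)) 0"
proof -
  have "(2*m) mod 10 = 2 * (m mod 5)" using mod_mult_mult1[of 2 m 5] by simp
  hence "(2*m+1) mod 10 = (2 * (m mod 5) + 1) mod 10" by (metis mod_add_left_eq)
  hence e1: "Bsum b (2*m+1) = Bsum b (2*(m mod 5)+1)"
    using Bsum_mod[of b "2*m+1"] Bsum_mod[of b "2*(m mod 5)+1"] by simp
  have e2: "Suc m mod 5 = Suc (m mod 5) mod 5" by (simp add: mod_Suc_eq)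
  show ?thesis
  proof (cases "m mod 5 < 4")
    case True
    hence "Suc m mod 5 = Suc (m mod 5)" using e2 by simp
    thus ?thesis using e1 ab_step[of b "m mod 5"] Bsum_odd[of "m mod 5" b] True by simp
  next
    case False
    hence r: "m mod 5 = 4" by simp
    hence "Suc m mod 5 = 0" using e2 by simp
    moreover have "2 * (m mod 5) + 1 = 9" using r by simp
    ultimately show ?thesis using e1 ab_wrap[OF s] r by simp
  qed
qed

lemma tel: 
  assumes h1: "(x::complex) - y = d1" and h2: "y - z = d2" shows "x - z = d1 + d2"
proof -
  have "x - z = (x - y) + (y - z)" by simp
  thus ?thesis unfolding h1 h2 .
qed

lemma pattern:
  fixes b :: "nat \<Rightarrow> Z"
  assumes s: "(\<Sum>i=1..10. b i) = 0"
    and nd: "\<forall>i. odd i \<longrightarrow> \<not> fps_X dvd Bsum b i"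
    and lo: "odd l"
    and kk: "idx l = 2*k+1" "k<5"
    and d1: "fps_X dvd Bsum b l + Bsum b (l+2)"
    and d2: "fps_X dvd Bsum b (l+2) + Bsum b (l+4)"
  shows "ab b k = ab b ((k+2) mod 5) \<and> ab b ((k+1) mod 5) = ab b ((k+3) mod 5) \<and>
    ab b k \<noteq> ab b ((k+1) mod 5) \<and> ab b ((k+1) mod 5) \<noteq> ab b ((k+4) mod 5) \<and>
    ab b k \<noteq> ab b ((k+4) mod 5)"
proof -
  define D where "D m = fps_nth (Bsum b (2*m+1)) 0" for m
  define a where "a m = ab b (m mod 5)" for m
  define k1 where "k1 = Suc k"
  define k2 where "k2 = Suc k1"
  define k3 where "k3 = Suc k2"
  define k4 where "k4 = Suc k3"
  have f: "a m - a (Suc m) = D m" for m unfolding a_def D_def using ab_diff[OF s] .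
  have sh: "Bsum b (l + n) = Bsum b (2*k+1+n)" for n
    using Bsum_shift[of b l n] kk(1) by simp
  have s2: "2*k+1+2 = 2*k1+1" "2*k+1+4 = 2*k2+1" "2*k+1+6 = 2*k3+1" "2*k+1+8 = 2*k4+1"
    unfolding k1_def k2_def k3_def k4_def by simp_all
  have s0: "Bsum b l = Bsum b (2*k+1)" using sh[of 0] by simp
  have lo6: "odd (l+6)" "odd (l+8)" using lo by simp_all
  have n0: "D k \<noteq> 0" using nd lo s0 unfolding D_def X_dvd_iff[symmetric] by simp
  have n6: "D k3 \<noteq> 0" using nd lo6 sh[of 6] unfolding D_def X_dvd_iff[symmetric] s2 by simp
  have n8: "D k4 \<noteq> 0" using nd lo6 sh[of 8] unfolding D_def X_dvd_iff[symmetric] s2 by simp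
  have e1: "D k + D k1 = 0" using d1 s0 sh[of 2] unfolding D_def X_dvd_iff s2 by simp
  have e2: "D k1 + D k2 = 0" using d2 sh[of 2] sh[of 4] unfolding D_def X_dvd_iff s2 by simp
  have f0: "a k - a k1 = D k" using f[of k] unfolding k1_def .
  have f1: "a k1 - a k2 = D k1" using f[of k1] unfolding k2_def .
  have f2: "a k2 - a k3 = D k2" using f[of k2] unfolding k3_def .
  have f3: "a k3 - a k4 = D k3" using f[of k3] unfolding k4_def .
  have g1: "a k - a k2 = D k + D k1" using tel[OF f0 f1] .
  have g2: "a k1 - a k3 = D k1 + D k2" using tel[OF f1 f2] .
  have g3: "a k1 - a k4 = D k1 + D k2 + D k3" using tel[OF tel[OF f1 f2] f3] .
  have a5: "a (Suc k4) = a k" unfolding a_def k4_def k3_def k2_def k1_def by simp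
  have g4: "a k4 - a k = D k4" using f[of k4] unfolding a5 .
  have r1: "a k = a k2" using g1 e1 by simp
  have r2: "a k1 = a k3" using g2 e2 by simp
  have r3: "a k \<noteq> a k1" using f0 n0 by auto
  have r4: "a k1 \<noteq> a k4" using g3 e2 n6 by auto
  have r5: "a k \<noteq> a k4" using g4 n8 by auto
  have a0: "ab b k = a k" unfolding a_def using kk(2) by simp
  have ks: "a k1 = ab b ((k+1) mod 5)" "a k2 = ab b ((k+2) mod 5)" "a k3 = ab b ((k+3) mod 5)"
    "a k4 = ab b ((k+4) mod 5)"
    unfolding a_def k1_def k2_def k3_def k4_def by (simp_all add: add.commute)
  show ?thesis using r1 r2 r3 r4 r5 unfolding a0 ks by simp
qed

lemma mobius:
  fixes z1 z2 z3 w1 w2 w3 :: complex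
  assumes "z1 \<noteq> z2" "z2 \<noteq> z3" "z1 \<noteq> z3" "w1 \<noteq> w2" "w2 \<noteq> w3" "w1 \<noteq> w3"
  shows "\<exists>h11 h12 h21 h22. h11*h22 - h12*h21 \<noteq> 0 \<and>
     h11*z1 + h12 = w1*(h21*z1+h22) \<and> h11*z2 + h12 = w2*(h21*z2+h22) \<and>
     h11*z3 + h12 = w3*(h21*z3+h22)"
proof -
  define m11 where "m11 = z2 - z3"
  define m12 where "m12 = - z1*(z2 - z3)"
  define m21 where "m21 = z2 - z1"
  define m22 where "m22 = - z3*(z2 - z1)"
  define n11 where "n11 = w2 - w3"
  define n12 where "n12 = - w1*(w2 - w3)"
  define n21 where "n21 = w2 - w1"
  define n22 where "n22 = - w3*(w2 - w1)"
  define h11 where "h11 = n22*m11 - n12*m21"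
  define h12 where "h12 = n22*m12 - n12*m22"
  define h21 where "h21 = - n21*m11 + n11*m21"
  define h22 where "h22 = - n21*m12 + n11*m22"
  have dm: "(a*e+b*g)*(c*f+d*h) - (a*f+b*h)*(c*e+d*g) = (a*d-b*c)*(e*h-f*g)" for a b c d e f g h :: complex
    by (simp add: algebra_simps)
  have d1: "m11*m22 - m12*m21 = (z2-z3)*(z2-z1)*(z1-z3)"
    unfolding m11_def m12_def m21_def m22_def by (simp add: algebra_simps)
  have d2: "n22*n11 - (-n12)*(-n21) = (w2-w3)*(w2-w1)*(w1-w3)"
    unfolding n11_def n12_def n21_def n22_def by (simp add: algebra_simps)
  have deq: "h11*h22 - h12*h21 = ((w2-w3)*(w2-w1)*(w1-w3)) * ((z2-z3)*(z2-z1)*(z1-z3))"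
  proof -
    have "h11*h22 - h12*h21 = (n22*n11 - (-n12)*(-n21)) * (m11*m22 - m12*m21)"
      using dm[of n22 m11 "-n12" m21 "-n21" m12 n11 m22]
      unfolding h11_def h12_def h21_def h22_def by (simp add: algebra_simps)
    thus ?thesis unfolding d1 d2 .
  qed
  have dne: "((w2-w3)*(w2-w1)*(w1-w3)) * ((z2-z3)*(z2-z1)*(z1-z3)) \<noteq> 0"
    using assms by auto
  have gen: "h11*z + h12 - w*(h21*z + h22) = (m11*z+m12)*(n22 + w*n21) - (m21*z+m22)*(n12 + w*n11)" for z w
    unfolding h11_def h12_def h21_def h22_def by (simp add: algebra_simps)
  have c1: "m11*z1+m12 = 0" "n12 + w1*n11 = 0" unfolding m11_def m12_def n11_def n12_def
    by (simp_all add: algebra_simps)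
  have c3: "m21*z3+m22 = 0" "n22 + w3*n21 = 0" unfolding m21_def m22_def n21_def n22_def
    by (simp_all add: algebra_simps)
  have c2: "m11*z2+m12 = m21*z2+m22" "n22 + w2*n21 = n12 + w2*n11"
    unfolding m11_def m12_def m21_def m22_def n11_def n12_def n21_def n22_def
    by (simp_all add: algebra_simps)
  have q1: "h11*z1 + h12 - w1*(h21*z1+h22) = 0" unfolding gen c1 by simp
  have q2: "h11*z2 + h12 - w2*(h21*z2+h22) = 0" unfolding gen c2 by simp
  have q3: "h11*z3 + h12 - w3*(h21*z3+h22) = 0" unfolding gen c3 by simp
  show ?thesis
    apply (rule exI[of _ h11], rule exI[of _ h12], rule exI[of _ h21], rule exI[of _ h22])
    using deq dne q1 q2 q3 by (simp only: right_minus_eq) simp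
qed

theorem theorem2p7:
  fixes b c :: "nat \<Rightarrow> complex fps" and l :: nat
  assumes "(\<Sum>i=1..10. b i) = 0" and "(\<Sum>i=1..10. c i) = 0"
    and "\<forall>i. odd i \<longrightarrow> \<not> fps_X dvd Bsum b i"
    and "\<forall>i. odd i \<longrightarrow> \<not> fps_X dvd Bsum c i"
    and "odd l"
    and "fps_X dvd Bsum b l + Bsum b (l + 2)"
    and "fps_X dvd Bsum b (l + 2) + Bsum b (l + 4)"
    and "\<forall>i. odd i \<and> idx i \<noteq> idx l \<and> idx i \<noteq> idx (l + 2) \<longrightarrow>
           \<not> fps_X dvd Bsum b i + Bsum b (i + 2)"
    and "fps_X dvd Bsum c l + Bsum c (l + 2)"
    and "fps_X dvd Bsum c (l + 2) + Bsum c (l + 4)"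
    and "\<forall>i. odd i \<and> idx i \<noteq> idx l \<and> idx i \<noteq> idx (l + 2) \<longrightarrow>
           \<not> fps_X dvd Bsum c i + Bsum c (i + 2)"
  shows "M_iso b c"
proof -
  define k where "k = ((l + 9) mod 10) div 2"
  have ev: "even ((l + 9) mod 10)"
    using assms(5) by presburger
  have kk: "idx l = 2*k+1" "k < 5" using ev unfolding k_def idx_def by auto
  note pb = pattern[OF assms(1) assms(3) assms(5) kk assms(6) assms(7)]
  note pc = pattern[OF assms(2) assms(4) assms(5) kk assms(9) assms(10)]
  let ?k1 = "(k+1) mod 5" and ?k2 = "(k+2) mod 5" and ?k3 = "(k+3) mod 5" and ?k4 = "(k+4) mod 5"
  have pb1: "ab b k = ab b ?k2" "ab b ?k1 = ab b ?k3" "ab b k \<noteq> ab b ?k1" "ab b ?k1 \<noteq> ab b ?k4"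
    "ab b k \<noteq> ab b ?k4" using pb by blast+
  have pc1: "ab c k = ab c ?k2" "ab c ?k1 = ab c ?k3" "ab c k \<noteq> ab c ?k1" "ab c ?k1 \<noteq> ab c ?k4"
    "ab c k \<noteq> ab c ?k4" using pc by blast+
  obtain h11 h12 h21 h22 where hd: "h11*h22 - h12*h21 \<noteq> 0"
    and h1: "h11*ab b k + h12 = ab c k*(h21*ab b k+h22)"
    and h2: "h11*ab b ?k1 + h12 = ab c ?k1*(h21*ab b ?k1+h22)"
    and h3: "h11*ab b ?k4 + h12 = ab c ?k4*(h21*ab b ?k4+h22)"
    using mobius[OF pb1(3) pb1(4) pb1(5) pc1(3) pc1(4) pc1(5)] by blast
  have "\<forall>m<5. h11 * ab b m + h12 = ab c m * (h21 * ab b m + h22)"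
  proof (intro allI impI)
    fix m :: nat assume m: "m < 5"
    have "k \<in> {0,1,2,3,4}" "m \<in> {0,1,2,3,4}" using m kk(2) by auto
    hence "m = k \<or> m = ?k1 \<or> m = ?k2 \<or> m = ?k3 \<or> m = ?k4" by auto
    thus "h11 * ab b m + h12 = ab c m * (h21 * ab b m + h22)"
    proof (elim disjE)
      assume "m = k" thus ?thesis using h1 by simp
    next
      assume "m = ?k1" thus ?thesis using h2 by simp
    next
      assume "m = ?k2" thus ?thesis using h1 pb1(1) pc1(1) by simp
    next
      assume "m = ?k3" thus ?thesis using h2 pb1(2) pc1(2) by simp
    next
      assume "m = ?k4" thus ?thesis using h3 by simp
    qed
  qed
  thus ?thesis using core[OF assms(1,2) hd] by blast
qed

end
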